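(* Assume A1 and A2, and let $W$ be a compact neighborhood of $A$ with $\vartheta^{(t)}W\subset\vartheta^{(t')}W$ for $t\ge t'\ge0$ and $\bigcap_{t\ge0}\vartheta^{(t)}W=A$. Then: (1) for all $i$, $t,t_0$, $s_0$: $\sum_{j=1}^m U_{ij}(t,t_0,s_0)=\breve U(t,t_0,s_0)$, where $U(t,t_0,s_0)=(U_{ij}(t,t_0,s_0))_{i,j=1}^m$ with $n\times n$ blocks and $\breve U(t,t_0,s_0)$ is the solution matrix of $\dot u=\frac{\partial f}{\partial s}(s(t))u$, $s(t_0)=s_0$; (2) for any given $t\ge0$, $U(t+t_0,t_0,s_0)$ is bounded uniformly over all $t_0\ge0$ and $s_0\in W$, and the family $\{s_0\mapsto U(t+t_0,t_0,s_0)\}_{t_0\ge0}$ is equicontinuous on $W$.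
   Context: Assumption A1: there are functions $f^i:\mathbb R^{nm}\times[0,\infty)\to\mathbb R^n$, $i=1,\dots,m$, and $f:\mathbb R^n\to\mathbb R^n$ such that (a) $f^i(s,\dots,s,t)=f(s)$ for all $i,s,t$; (b) $x\mapsto f^i(x,t)$ is $C^1$ for each $t$, with Jacobian $DF^t(x)=(\partial f^i/\partial x^j(x,t))_{i,j}\in\mathbb R^{nm\times nm}$; (c) $\|DF^t(x)\|\le\phi(x)$ for some locally bounded $\phi$; (d) $\|DF^t(x)-DF^t(y)\|\le K(x,y)\|x-y\|$ for some locally bounded $K$, all $t$; (e) $f^i(x,t)$ and $DF^t(x)$ are measurable in $t$. Assumption A2: with $\vartheta^{(t)}$ the semiflow of $\dot s=f(s)$, there is a compact $A\subset\mathbb R^n$ with (a) $\vartheta^{(t)}A\subset A$; (b) an open bounded neighborhood $U$ of $A$ with $\bigcap_{t\ge0}\vartheta^{(t)}\overline U=A$; (c) some $s_0\in A$ whose $\omega$-limit set equals $A$. $s(t)$ solves $\dot s=f(s)$, $s(t_0)=s_0$; $U(t,t_0,s_0)$ is the solution matrix (identity at $t_0$) of $\dot{\delta x}=DF^t(\hat s(t))\delta x$ with $\hat s=[s^\top,\dots,s^\top]^\top\in\mathbb R^{nm}$. *)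

theory Defs
  imports "HOL-Analysis.Analysis"
begin

definition locally_bounded :: "('a::metric_space \<Rightarrow> real) \<Rightarrow> bool" where
  "locally_bounded g \<longleftrightarrow> (\<forall>x. \<exists>e>0. bounded (g ` ball x e))"

definition ode_sol :: "('a::real_normed_vector \<Rightarrow> 'a) \<Rightarrow> real set \<Rightarrow> real \<Rightarrow> 'a \<Rightarrow> (real \<Rightarrow> 'a) \<Rightarrow> bool" where
  "ode_sol f T t0 x0 x \<longleftrightarrow> t0 \<in> T \<and> x t0 = x0 \<and>
     (\<forall>\<tau>\<in>T. (x has_vector_derivative f (x \<tau>)) (at \<tau> within T))"

text \<open>Caratheodory (integral-equation) solution of the non-autonomous ODE  x' = A t x
  on the interval T with x t0 = x0 (A only measurable in t).\<close>
definition car_sol :: "(real \<Rightarrow> 'a::real_normed_vector \<Rightarrow> 'a) \<Rightarrow> real set \<Rightarrow> real \<Rightarrow> 'a \<Rightarrow> (real \<Rightarrow> 'a) \<Rightarrow> bool" where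
  "car_sol A T t0 x0 x \<longleftrightarrow> t0 \<in> T \<and> x t0 = x0 \<and> continuous_on T x \<and>
     (\<forall>t\<in>T. t0 \<le> t \<longrightarrow> ((\<lambda>\<tau>. A \<tau> (x \<tau>)) has_integral (x t - x0)) {t0..t}) \<and>
     (\<forall>t\<in>T. t \<le> t0 \<longrightarrow> ((\<lambda>\<tau>. A \<tau> (x \<tau>)) has_integral (x0 - x t)) {t..t0})"

text \<open>Image of a set S under the time-t map of the semiflow of  s' = f s  (t \<ge> 0).\<close>
definition flow_img :: "('a::real_normed_vector \<Rightarrow> 'a) \<Rightarrow> real \<Rightarrow> 'a set \<Rightarrow> 'a set" where
  "flow_img f t S = {y. \<exists>x s. s \<in> S \<and> ode_sol f {0..t} 0 s x \<and> x t = y}"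

definition omega_limit :: "('a::real_normed_vector \<Rightarrow> 'a) \<Rightarrow> 'a \<Rightarrow> 'a set" where
  "omega_limit f s0 = {y. \<exists>x. ode_sol f {0..} 0 s0 x \<and>
      (\<exists>tn::nat \<Rightarrow> real. filterlim tn at_top sequentially \<and> (\<lambda>k. x (tn k)) \<longlonglongrightarrow> y)}"

definition hat :: "'b \<Rightarrow> 'b ^ 'm" where
  "hat s = (\<chi> i. s)"

definition block :: "(real^'n^'m \<Rightarrow> real^'n^'m) \<Rightarrow> 'm \<Rightarrow> 'm \<Rightarrow> real^'n \<Rightarrow> real^'n" where
  "block M i j u = (M (\<chi> k. if k = j then u else 0)) $ i"

end

theory Submission
  imports Defs
begin


lemma gronwall_fwd:
  fixes u :: "real \<Rightarrow> real"
  assumes cont: "continuous_on {a..b} u" and K: "0 \<le> K"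
    and le: "\<And>r. r \<in> {a..b} \<Longrightarrow> u r \<le> C + K * integral {a..r} u"
    and r: "r \<in> {a..b}"
  shows "u r \<le> C * exp (K * (r - a))"
proof -
  define w where "w r = C + K * integral {a..r} u" for r
  define g where "g r = w r * exp (- (K * (r - a)))" for r
  have wd: "(w has_real_derivative K * u x) (at x within {a..b})" if "x \<in> {a..b}" for x
  proof -
    have "((\<lambda>r. integral {a..r} u) has_real_derivative u x) (at x within {a..b})"
      using integral_has_real_derivative[OF cont that] .
    then show ?thesis unfolding w_def
      by (auto intro!: derivative_eq_intros)
  qed
  have gd: "(g has_real_derivative (K * u x - K * w x) * exp (- (K * (x - a)))) (at x within {a..b})"
    if "x \<in> {a..b}" for x
    unfolding g_def
    by (rule derivative_eq_intros wd[OF that] refl)+ (simp add: algebra_simps)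
  have gcont: "continuous_on {a..b} g"
    using gd by (meson DERIV_continuous continuous_on_eq_continuous_within)
  have "g r \<le> g a"
  proof (rule DERIV_nonpos_imp_decreasing_open[of a r g])
    show "a \<le> r" using r by auto
    show "continuous_on {a..r} g" using gcont r by (auto elim: continuous_on_subset)
    fix x assume x: "a < x" "x < r"
    then have xi: "x \<in> {a..b}" using r by auto
    have "(g has_real_derivative (K * u x - K * w x) * exp (- (K * (x - a)))) (at x)"
      using gd[OF xi] x r
      by (metis at_within_Icc_at atLeastAtMost_iff le_less_trans less_eq_real_def)
    moreover have "(K * u x - K * w x) * exp (- (K * (x - a))) \<le> 0"
    proof -
      have "K * u x \<le> K * w x" unfolding w_def by (rule mult_left_mono[OF le[OF xi] K])
      then show ?thesis by (intro mult_nonpos_nonneg) auto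
    qed
    ultimately show "\<exists>y. (g has_real_derivative y) (at x) \<and> y \<le> 0" by blast
  qed
  also have "g a = C" by (simp add: g_def w_def)
  finally have "w r * exp (- (K * (r - a))) \<le> C" by (simp add: g_def)
  then have "w r * exp (- (K * (r - a))) * exp (K * (r - a)) \<le> C * exp (K * (r - a))"
    by (rule mult_right_mono) simp
  then have "w r \<le> C * exp (K * (r - a))"
    by (simp add: mult.assoc flip: exp_add)
  moreover have "u r \<le> w r" using le[OF r] by (simp add: w_def)
  ultimately show ?thesis by linarith
qed

lemma gronwall_bwd:
  fixes u :: "real \<Rightarrow> real"
  assumes cont: "continuous_on {a..b} u" and K: "0 \<le> K"
    and le: "\<And>r. r \<in> {a..b} \<Longrightarrow> u r \<le> C + K * integral {r..b} u"
    and r: "r \<in> {a..b}"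
  shows "u r \<le> C * exp (K * (b - r))"
proof -
  define v where "v s = u (- s)" for s
  have vc: "continuous_on {-b..-a} v" unfolding v_def
    by (rule continuous_on_compose2[OF cont]) (auto intro!: continuous_intros)
  have "v (-r) \<le> C * exp (K * (-r - -b))"
  proof (rule gronwall_fwd[OF vc K])
    fix s assume s: "s \<in> {-b..-a}"
    have "integral {-b..s} v = integral {-s..b} u"
      using Henstock_Kurzweil_Integration.integral_reflect_real[of b "-s" u] unfolding v_def minus_minus .
    then show "v s \<le> C + K * integral {-b..s} v"
      using le[of "-s"] s by (simp add: v_def)
  qed (use r in auto)
  then show ?thesis by (simp add: v_def)
qed

lemma int_norm_le:
  fixes g :: "real \<Rightarrow> 'a::banach"
  assumes "(g has_integral I) {a..b}" "continuous_on {a..b} h"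
    "\<And>\<tau>. \<tau> \<in> {a..b} \<Longrightarrow> norm (g \<tau>) \<le> h \<tau>"
  shows "norm I \<le> integral {a..b} h"
proof -
  have "I = integral {a..b} g" using assms(1) by (simp add: integral_unique)
  then show ?thesis
    using integral_norm_bound_integral[OF has_integral_integrable[OF assms(1)]
        integrable_continuous_real[OF assms(2)] assms(3)] by simp
qed

lemma car_uniq:
  fixes A :: "real \<Rightarrow> 'a::banach \<Rightarrow> 'a"
  assumes x: "car_sol A T t0 x0 x" and y: "car_sol A T t0 x0 y"
    and lin: "\<And>\<tau> a b. \<tau> \<in> T \<Longrightarrow> A \<tau> a - A \<tau> b = A \<tau> (a - b)"
    and seg: "{min t0 t..max t0 t} \<subseteq> T"
    and M: "0 \<le> M" "\<And>\<tau> w. \<tau> \<in> {min t0 t..max t0 t} \<Longrightarrow> norm (A \<tau> w) \<le> M * norm w"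
  shows "x t = y t"
proof -
  define u where "u \<tau> = norm (x \<tau> - y \<tau>)" for \<tau>
  have uc: "continuous_on {min t0 t..max t0 t} u"
    unfolding u_def using x y seg unfolding car_sol_def
    by (intro continuous_intros) (auto elim: continuous_on_subset)
  have bnd: "norm (A \<tau> (x \<tau>) - A \<tau> (y \<tau>)) \<le> M * u \<tau>"
    if "\<tau> \<in> {min t0 t..max t0 t}" for \<tau>
    using lin[of \<tau>] M(2)[OF that] that seg unfolding u_def by auto
  show ?thesis
  proof (cases "t0 \<le> t")
    case True
    have uc': "continuous_on {t0..t} u" using uc True by simp
    have "u r \<le> 0 + M * integral {t0..r} u" if r: "r \<in> {t0..t}" for r
    proof -
      have rT: "r \<in> T" using r seg True by auto
      have "((\<lambda>\<tau>. A \<tau> (x \<tau>) - A \<tau> (y \<tau>)) has_integral ((x r - x0) - (y r - x0))) {t0..r}"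
        using x y rT r unfolding car_sol_def by (intro has_integral_diff) auto
      then have "norm ((x r - x0) - (y r - x0)) \<le> integral {t0..r} (\<lambda>\<tau>. M * u \<tau>)"
        by (rule int_norm_le) (use uc' r bnd True in \<open>auto intro!: continuous_intros elim: continuous_on_subset\<close>)
      then show ?thesis by (simp add: u_def[abs_def])
    qed
    from gronwall_fwd[OF uc' M(1) this, of t] True have "u t \<le> 0" by simp
    then show ?thesis by (simp add: u_def)
  next
    case False
    have uc': "continuous_on {t..t0} u" using uc False by simp
    have "u r \<le> 0 + M * integral {r..t0} u" if r: "r \<in> {t..t0}" for r
    proof -
      have rT: "r \<in> T" using r seg False by auto
      have "((\<lambda>\<tau>. A \<tau> (x \<tau>) - A \<tau> (y \<tau>)) has_integral ((x0 - x r) - (x0 - y r))) {r..t0}"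
        using x y rT r unfolding car_sol_def by (intro has_integral_diff) auto
      then have "norm ((x0 - x r) - (x0 - y r)) \<le> integral {r..t0} (\<lambda>\<tau>. M * u \<tau>)"
        by (rule int_norm_le) (use uc' r bnd False in \<open>auto intro!: continuous_intros elim: continuous_on_subset\<close>)
      then show ?thesis by (simp add: u_def[abs_def] norm_minus_commute)
    qed
    from gronwall_bwd[OF uc' M(1) this, of t] False have "u t \<le> 0" by simp
    then show ?thesis by (simp add: u_def)
  qed
qed

lemma lb_compact:
  fixes g :: "'a::metric_space \<Rightarrow> real"
  assumes "locally_bounded g" "compact S"
  shows "\<exists>B\<ge>0. \<forall>x\<in>S. \<bar>g x\<bar> \<le> B"
proof -
  have "\<forall>x. \<exists>e>0. \<exists>b. \<forall>y\<in>ball x e. \<bar>g y\<bar> \<le> b"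
    using assms(1) unfolding locally_bounded_def bounded_iff by fastforce
  then obtain e b where eb: "\<And>x. e x > 0" "\<And>x y. y \<in> ball x (e x) \<Longrightarrow> \<bar>g y\<bar> \<le> b x"
    by metis
  obtain D where D: "D \<subseteq> S" "finite D" "S \<subseteq> (\<Union>c\<in>D. ball c (e c))"
    by (rule compactE_image[OF assms(2), of S "\<lambda>c. ball c (e c)"]) (use eb(1) in auto)
  define B where "B = Max (insert 0 (b ` D))"
  have "\<bar>g x\<bar> \<le> B" if xS: "x \<in> S" for x
  proof -
    obtain c where "c \<in> D" "x \<in> ball c (e c)" using D(3) xS by blast
    then have "\<bar>g x\<bar> \<le> b c" using eb(2) by auto
    also have "b c \<le> B" unfolding B_def using \<open>c \<in> D\<close> D(2) by (auto intro: Max_ge)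
    finally show ?thesis .
  qed
  moreover have "B \<ge> 0" unfolding B_def using D(2) by (auto intro: Max_ge)
  ultimately show ?thesis by blast
qed

lemma hat_bl: "bounded_linear (hat :: 'b::real_normed_vector \<Rightarrow> 'b ^ 'm)"
proof (rule bounded_linear_intro[where K = "sqrt (real CARD('m))"])
  show "hat (x + y) = (hat x + hat y :: 'b ^ 'm)" for x y by (simp add: hat_def vec_eq_iff)
  show "hat (r *\<^sub>R x) = (r *\<^sub>R hat x :: 'b ^ 'm)" for r x by (simp add: hat_def vec_eq_iff)
  show "norm (hat x :: 'b ^ 'm) \<le> norm x * sqrt (real CARD('m))" for x
    by (simp add: hat_def norm_vec_def L2_set_def real_sqrt_mult power2_eq_square)
qed

lemma norm_hat: "norm (hat x :: 'b::real_normed_vector ^ 'm) = sqrt (real CARD('m)) * norm x"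
  by (simp add: hat_def norm_vec_def L2_set_def real_sqrt_mult)

lemma f_deriv:
  fixes F :: "real^'n^'m \<Rightarrow> real \<Rightarrow> real^'n^'m"
    and f :: "real^'n \<Rightarrow> real^'n"
    and DF :: "real \<Rightarrow> real^'n^'m \<Rightarrow> ((real^'n^'m) \<Rightarrow>\<^sub>L (real^'n^'m))"
  assumes A1a: "\<And>s t. t \<ge> 0 \<Longrightarrow> F (hat s) t = hat (f s)"
    and A1b: "\<And>x t. t \<ge> 0 \<Longrightarrow> ((\<lambda>y. F y t) has_derivative blinfun_apply (DF t x)) (at x)"
    and \<tau>: "\<tau> \<ge> 0"
  shows "DF \<tau> (hat s) (hat w) = hat (frechet_derivative f (at s) w)"
proof -
  have hd: "(hat has_derivative hat) (at s)"
    using hat_bl by (rule bounded_linear_imp_has_derivative)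
  have c1: "((\<lambda>y. F y \<tau>) \<circ> hat has_derivative (DF \<tau> (hat s) \<circ> hat)) (at s)"
    by (rule diff_chain_at[OF hd A1b[OF \<tau>]])
  obtain i0 :: 'm where True by simp
  have "((\<lambda>v. v $ i0) \<circ> ((\<lambda>y. F y 0) \<circ> hat) has_derivative ((\<lambda>v. v $ i0) \<circ> (DF 0 (hat s) \<circ> hat))) (at s)"
    by (rule diff_chain_at[OF diff_chain_at[OF hd A1b]])
      (auto intro: bounded_linear_imp_has_derivative)
  moreover have "(\<lambda>v. v $ i0) \<circ> ((\<lambda>y. F y 0) \<circ> hat) = f"
    by (rule ext) (simp only: comp_apply A1a[OF order_refl], simp add: hat_def)
  ultimately have "f differentiable (at s)" unfolding differentiable_def by auto
  then have fd: "(f has_derivative frechet_derivative f (at s)) (at s)"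
    using frechet_derivative_works by blast
  have c2: "(hat \<circ> f has_derivative (hat \<circ> frechet_derivative f (at s))) (at s)"
    by (rule diff_chain_at[OF fd]) (rule bounded_linear_imp_has_derivative[OF hat_bl])
  have "(\<lambda>y. F y \<tau>) \<circ> hat = (hat \<circ> f :: real^'n \<Rightarrow> real^'n^'m)"
    by (rule ext) (simp add: A1a[OF \<tau>])
  with c1 c2 have "DF \<tau> (hat s) \<circ> hat = hat \<circ> frechet_derivative f (at s)"
    using has_derivative_unique by metis
  then show ?thesis by (metis comp_apply)
qed

lemma ode_cont:
  assumes "ode_sol f T t0 x0 x" shows "continuous_on T x"
  using assms unfolding ode_sol_def
  by (meson continuous_on_eq_continuous_within has_vector_derivative_continuous)

lemma part1:
  fixes F :: "real^'n^'m \<Rightarrow> real \<Rightarrow> real^'n^'m"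
    and f :: "real^'n \<Rightarrow> real^'n"
    and DF :: "real \<Rightarrow> real^'n^'m \<Rightarrow> ((real^'n^'m) \<Rightarrow>\<^sub>L (real^'n^'m))"
    and \<phi> :: "real^'n^'m \<Rightarrow> real"
  assumes A1a: "\<And>s t. t \<ge> 0 \<Longrightarrow> F (hat s) t = hat (f s)"
    and A1b: "\<And>x t. t \<ge> 0 \<Longrightarrow> ((\<lambda>y. F y t) has_derivative blinfun_apply (DF t x)) (at x)"
    and A1c: "locally_bounded \<phi>" "\<And>x t. t \<ge> 0 \<Longrightarrow> norm (DF t x) \<le> \<phi> x"
    and t0: "t0 \<ge> 0" and s: "ode_sol f {0..} t0 s0 s"
    and U: "\<And>v. car_sol (\<lambda>\<tau> x. DF \<tau> (hat (s \<tau>)) x) {0..} t0 v (\<lambda>t. U t v)"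
    and Ub: "\<And>u. car_sol (\<lambda>\<tau> y. frechet_derivative f (at (s \<tau>)) y) {0..} t0 u (\<lambda>t. Ub t u)"
    and t: "t \<ge> 0"
  shows "(\<Sum>j\<in>UNIV. block (U t) i j u) = Ub t u"
proof -
  define A where "A \<tau> x = DF \<tau> (hat (s \<tau>)) x" for \<tau> x
  define e :: "'m \<Rightarrow> real^'n^'m" where "e j = (\<chi> k. if k = j then u else 0)" for j
  define Y where "Y \<tau> = (\<Sum>j\<in>UNIV. U \<tau> (e j))" for \<tau>
  define X where "X \<tau> = (hat (Ub \<tau> u) :: real^'n^'m)" for \<tau>
  have he: "(\<Sum>j\<in>UNIV. e j) = hat u" by (simp add: e_def hat_def vec_eq_iff)
  have Ysol: "car_sol A {0..} t0 (hat u) Y"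
  proof -
    have "continuous_on {0..} Y" unfolding Y_def
      using U unfolding car_sol_def by (intro continuous_on_sum) auto
    moreover have "((\<lambda>\<tau>. A \<tau> (Y \<tau>)) has_integral (Y r - hat u)) {t0..r}" if "r \<ge> 0" "t0 \<le> r" for r
    proof -
      have "((\<lambda>\<tau>. \<Sum>j\<in>UNIV. A \<tau> (U \<tau> (e j))) has_integral (\<Sum>j\<in>UNIV. U r (e j) - e j)) {t0..r}"
        using U that unfolding car_sol_def A_def by (intro has_integral_sum) auto
      then show ?thesis unfolding Y_def A_def
        by (simp add: blinfun.sum_right sum_subtractf he)
    qed
    moreover have "((\<lambda>\<tau>. A \<tau> (Y \<tau>)) has_integral (hat u - Y r)) {r..t0}" if "r \<ge> 0" "r \<le> t0" for r
    proof -
      have "((\<lambda>\<tau>. \<Sum>j\<in>UNIV. A \<tau> (U \<tau> (e j))) has_integral (\<Sum>j\<in>UNIV. e j - U r (e j))) {r..t0}"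
        using U that unfolding car_sol_def A_def by (intro has_integral_sum) auto
      then show ?thesis unfolding Y_def A_def
        by (simp add: blinfun.sum_right sum_subtractf he)
    qed
    moreover have "Y t0 = hat u" using U he unfolding Y_def car_sol_def by simp
    ultimately show ?thesis using t0 unfolding car_sol_def by auto
  qed
  have eqA: "A \<tau> (hat w) = hat (frechet_derivative f (at (s \<tau>)) w)" if "\<tau> \<ge> 0" for \<tau> w
    unfolding A_def by (rule f_deriv[OF A1a A1b that])
  have hl: "linear (hat :: real^'n \<Rightarrow> real^'n^'m)" using hat_bl bounded_linear.linear by blast
  have Xsol: "car_sol A {0..} t0 (hat u) X"
  proof -
    have "continuous_on {0..} X" unfolding X_def
      using Ub[of u] unfolding car_sol_def
      by (intro continuous_on_compose2[OF linear_continuous_on[OF hat_bl]]) auto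
    moreover have "((\<lambda>\<tau>. A \<tau> (X \<tau>)) has_integral (X r - hat u)) {t0..r}" if "r \<ge> 0" "t0 \<le> r" for r
    proof -
      have "(((hat :: real^'n \<Rightarrow> real^'n^'m) \<circ> (\<lambda>\<tau>. frechet_derivative f (at (s \<tau>)) (Ub \<tau> u))) has_integral hat (Ub r u - u)) {t0..r}"
        using Ub[of u] that unfolding car_sol_def by (intro has_integral_linear hat_bl) auto
      then have "(((hat :: real^'n \<Rightarrow> real^'n^'m) \<circ> (\<lambda>\<tau>. frechet_derivative f (at (s \<tau>)) (Ub \<tau> u))) has_integral (hat (Ub r u) - hat u)) {t0..r}"
        by (simp only: linear_diff[OF hl])
      then show ?thesis unfolding X_def
        by (rule has_integral_eq[rotated]) (use eqA t0 in auto)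
    qed
    moreover have "((\<lambda>\<tau>. A \<tau> (X \<tau>)) has_integral (hat u - X r)) {r..t0}" if "r \<ge> 0" "r \<le> t0" for r
    proof -
      have "(((hat :: real^'n \<Rightarrow> real^'n^'m) \<circ> (\<lambda>\<tau>. frechet_derivative f (at (s \<tau>)) (Ub \<tau> u))) has_integral hat (u - Ub r u)) {r..t0}"
        using Ub[of u] that unfolding car_sol_def by (intro has_integral_linear hat_bl) auto
      then have "(((hat :: real^'n \<Rightarrow> real^'n^'m) \<circ> (\<lambda>\<tau>. frechet_derivative f (at (s \<tau>)) (Ub \<tau> u))) has_integral (hat u - hat (Ub r u))) {r..t0}"
        by (simp only: linear_diff[OF hl])
      then show ?thesis unfolding X_def
        by (rule has_integral_eq[rotated]) (use eqA that in auto)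
    qed
    moreover have "X t0 = hat u" using Ub[of u] unfolding X_def car_sol_def by simp
    ultimately show ?thesis using t0 unfolding car_sol_def by auto
  qed
  define I where "I = {min t0 t..max t0 t}"
  have I0: "I \<subseteq> {0..}" using t0 t unfolding I_def by auto
  have sc: "continuous_on I s" using continuous_on_subset[OF ode_cont[OF s] I0] .
  have "continuous_on I ((hat :: real^'n \<Rightarrow> real^'n^'m) \<circ> s)"
    by (rule continuous_on_compose[OF sc linear_continuous_on[OF hat_bl]])
  then have "compact (((hat :: real^'n \<Rightarrow> real^'n^'m) \<circ> s) ` I)"
    by (rule compact_continuous_image) (simp add: I_def)
  then have "compact ((hat :: real^'n \<Rightarrow> real^'n^'m) ` s ` I)" by (simp add: image_comp)
  from lb_compact[OF A1c(1) this] obtain B where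
    B: "B \<ge> 0" "\<forall>x\<in>(hat :: real^'n \<Rightarrow> real^'n^'m) ` s ` I. \<bar>\<phi> x\<bar> \<le> B"
    by blast
  have "Y t = X t"
  proof (rule car_uniq[OF Ysol Xsol, of t B])
    show "A \<tau> a - A \<tau> b = A \<tau> (a - b)" for \<tau> a b by (simp add: A_def blinfun.diff_right)
    show "{min t0 t..max t0 t} \<subseteq> {0..}" using I0 I_def by simp
    show "0 \<le> B" by fact
    fix \<tau> w assume \<tau>: "\<tau> \<in> {min t0 t..max t0 t}"
    have "norm (A \<tau> w) \<le> norm (DF \<tau> (hat (s \<tau>))) * norm w" unfolding A_def by (rule norm_blinfun)
    also have "\<dots> \<le> B * norm w"
    proof (rule mult_right_mono)
      have \<tau>I: "\<tau> \<in> I" using \<tau> unfolding I_def .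
      then have "\<tau> \<ge> 0" using I0 by auto
      then have "norm (DF \<tau> (hat (s \<tau>))) \<le> \<phi> (hat (s \<tau>))" by (rule A1c(2))
      also have "\<dots> \<le> \<bar>\<phi> (hat (s \<tau>))\<bar>" by simp
      also have "\<dots> \<le> B" using \<tau>I B(2) by blast
      finally show "norm (DF \<tau> (hat (s \<tau>))) \<le> B" .
    qed simp
    finally show "norm (A \<tau> w) \<le> B * norm w" .
  qed
  then have "Y t $ i = Ub t u" by (simp add: X_def hat_def)
  then show ?thesis by (simp add: Y_def block_def e_def)
qed

lemma car_growth:
  fixes A :: "real \<Rightarrow> 'a::banach \<Rightarrow> 'a"
  assumes x: "car_sol A {t0..} t0 v x"
    and M: "0 \<le> M" "\<And>\<tau> w. \<tau> \<in> {t0..b} \<Longrightarrow> norm (A \<tau> w) \<le> M * norm w"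
    and r: "r \<in> {t0..b}"
  shows "norm (x r) \<le> norm v * exp (M * (r - t0))"
proof -
  define u where "u \<tau> = norm (x \<tau>)" for \<tau>
  have uc: "continuous_on {t0..b} u"
    unfolding u_def using x unfolding car_sol_def
    by (intro continuous_intros) (auto elim: continuous_on_subset)
  have "u q \<le> norm v + M * integral {t0..q} u" if q: "q \<in> {t0..b}" for q
  proof -
    have "((\<lambda>\<tau>. A \<tau> (x \<tau>)) has_integral (x q - v)) {t0..q}"
      using x q unfolding car_sol_def by auto
    then have "norm (x q - v) \<le> integral {t0..q} (\<lambda>\<tau>. M * u \<tau>)"
    proof (rule int_norm_le)
      show "continuous_on {t0..q} (\<lambda>\<tau>. M * u \<tau>)"
        using q by (intro continuous_on_mult_left continuous_on_subset[OF uc]) auto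
    qed (use q M in \<open>auto simp: u_def\<close>)
    moreover have "norm (x q) \<le> norm v + norm (x q - v)"
      using norm_triangle_ineq[of v "x q - v"] by simp
    ultimately show ?thesis by (simp add: u_def[abs_def])
  qed
  from gronwall_fwd[OF uc M(1) this r] show ?thesis by (simp add: u_def)
qed

lemma integral_lin_const:
  fixes u :: "real \<Rightarrow> real"
  assumes "continuous_on {a..r} u" "a \<le> r"
  shows "integral {a..r} (\<lambda>\<tau>. M * u \<tau> + P) = M * integral {a..r} u + P * (r - a)"
proof -
  have "integral {a..r} (\<lambda>\<tau>. M * u \<tau> + P) = integral {a..r} (\<lambda>\<tau>. M * u \<tau>) + integral {a..r} (\<lambda>\<tau>. P)"
    by (rule integral_add) (use assms in \<open>auto intro!: integrable_continuous_real continuous_intros\<close>)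
  then show ?thesis using assms by simp
qed

lemma car_diff:
  fixes A0 A1 :: "real \<Rightarrow> 'a::banach \<Rightarrow> 'a"
  assumes x1: "car_sol A1 {t0..} t0 v x1" and x0: "car_sol A0 {t0..} t0 v x0"
    and lin: "\<And>\<tau> a b. A1 \<tau> a - A1 \<tau> b = A1 \<tau> (a - b)"
    and M: "0 \<le> M" "\<And>\<tau> w. \<tau> \<in> {t0..b} \<Longrightarrow> norm (A1 \<tau> w) \<le> M * norm w"
    and P: "0 \<le> P" "\<And>\<tau>. \<tau> \<in> {t0..b} \<Longrightarrow> norm (A1 \<tau> (x0 \<tau>) - A0 \<tau> (x0 \<tau>)) \<le> P"
    and r: "r \<in> {t0..b}"
  shows "norm (x1 r - x0 r) \<le> P * (b - t0) * exp (M * (r - t0))"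
proof -
  define u where "u \<tau> = norm (x1 \<tau> - x0 \<tau>)" for \<tau>
  have uc: "continuous_on {t0..b} u"
    unfolding u_def using x1 x0 unfolding car_sol_def
    by (intro continuous_intros) (auto elim: continuous_on_subset)
  have "u q \<le> P * (b - t0) + M * integral {t0..q} u" if q: "q \<in> {t0..b}" for q
  proof -
    have "((\<lambda>\<tau>. A1 \<tau> (x1 \<tau>) - A0 \<tau> (x0 \<tau>)) has_integral ((x1 q - v) - (x0 q - v))) {t0..q}"
      using x1 x0 q unfolding car_sol_def by (intro has_integral_diff) auto
    then have "norm ((x1 q - v) - (x0 q - v)) \<le> integral {t0..q} (\<lambda>\<tau>. M * u \<tau> + P)"
    proof (rule int_norm_le)
      show "continuous_on {t0..q} (\<lambda>\<tau>. M * u \<tau> + P)"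
        using uc q by (auto intro!: continuous_intros elim: continuous_on_subset)
      fix \<tau> assume \<tau>: "\<tau> \<in> {t0..q}"
      then have \<tau>b: "\<tau> \<in> {t0..b}" using q by auto
      have "A1 \<tau> (x1 \<tau>) - A0 \<tau> (x0 \<tau>) = A1 \<tau> (x1 \<tau> - x0 \<tau>) + (A1 \<tau> (x0 \<tau>) - A0 \<tau> (x0 \<tau>))"
        by (simp only: lin[symmetric]) (simp add: algebra_simps)
      then have "norm (A1 \<tau> (x1 \<tau>) - A0 \<tau> (x0 \<tau>)) \<le> norm (A1 \<tau> (x1 \<tau> - x0 \<tau>)) + norm (A1 \<tau> (x0 \<tau>) - A0 \<tau> (x0 \<tau>))"
        by (simp only: norm_triangle_ineq)
      also have "\<dots> \<le> M * u \<tau> + P" using M(2)[OF \<tau>b] P(2)[OF \<tau>b] unfolding u_def by (intro add_mono) auto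
      finally show "norm (A1 \<tau> (x1 \<tau>) - A0 \<tau> (x0 \<tau>)) \<le> M * u \<tau> + P" .
    qed
    also have "\<dots> = M * integral {t0..q} u + P * (q - t0)"
      using uc q by (intro integral_lin_const) (auto elim: continuous_on_subset)
    also have "\<dots> \<le> M * integral {t0..q} u + P * (b - t0)"
      using q P(1) by (auto intro: mult_left_mono)
    finally show ?thesis by (simp add: u_def[abs_def])
  qed
  from gronwall_fwd[OF uc M(1) this r] show ?thesis by (simp add: u_def)
qed

lemma ode_int:
  fixes f :: "'a::banach \<Rightarrow> 'a"
  assumes S: "ode_sol f {t0..} t0 s0 S" and r: "t0 \<le> r"
  shows "((\<lambda>\<tau>. f (S \<tau>)) has_integral (S r - s0)) {t0..r}"
proof -
  have "((\<lambda>\<tau>. f (S \<tau>)) has_integral (S r - S t0)) {t0..r}"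
    by (rule fundamental_theorem_of_calculus[OF r, of S "\<lambda>\<tau>. f (S \<tau>)"])
      (use S in \<open>auto simp: ode_sol_def intro: has_vector_derivative_within_subset\<close>)
  then show ?thesis using S by (simp add: ode_sol_def)
qed

lemma traj_diff:
  fixes f :: "'a::banach \<Rightarrow> 'a"
  assumes S1: "ode_sol f {t0..} t0 s1 S1" and S0: "ode_sol f {t0..} t0 s0 S0"
    and L: "0 \<le> L" "\<And>\<tau>. \<tau> \<in> {t0..b} \<Longrightarrow> norm (f (S1 \<tau>) - f (S0 \<tau>)) \<le> L * norm (S1 \<tau> - S0 \<tau>)"
    and r: "r \<in> {t0..b}"
  shows "norm (S1 r - S0 r) \<le> norm (s1 - s0) * exp (L * (r - t0))"
proof -
  define u where "u \<tau> = norm (S1 \<tau> - S0 \<tau>)" for \<tau>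
  have uc: "continuous_on {t0..b} u"
    unfolding u_def using ode_cont[OF S1] ode_cont[OF S0]
    by (intro continuous_intros) (auto elim: continuous_on_subset)
  have "u q \<le> norm (s1 - s0) + L * integral {t0..q} u" if q: "q \<in> {t0..b}" for q
  proof -
    have "((\<lambda>\<tau>. f (S1 \<tau>) - f (S0 \<tau>)) has_integral ((S1 q - s1) - (S0 q - s0))) {t0..q}"
      using q by (intro has_integral_diff ode_int[OF S1] ode_int[OF S0]) auto
    then have "norm ((S1 q - s1) - (S0 q - s0)) \<le> integral {t0..q} (\<lambda>\<tau>. L * u \<tau>)"
    proof (rule int_norm_le)
      show "continuous_on {t0..q} (\<lambda>\<tau>. L * u \<tau>)"
        using q by (intro continuous_on_mult_left continuous_on_subset[OF uc]) auto
    qed (use q L in \<open>auto simp: u_def\<close>)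
    moreover have "norm (S1 q - S0 q) \<le> norm (s1 - s0) + norm ((S1 q - s1) - (S0 q - s0))"
    proof -
      have "S1 q - S0 q = (s1 - s0) + ((S1 q - s1) - (S0 q - s0))" by (simp add: algebra_simps)
      then show ?thesis by (metis norm_triangle_ineq)
    qed
    ultimately show ?thesis by (simp add: u_def[abs_def])
  qed
  from gronwall_fwd[OF uc L(1) this r] show ?thesis by (simp add: u_def)
qed

lemma traj_in_W:
  fixes f :: "'a::banach \<Rightarrow> 'a"
  assumes Wf: "\<And>t t'. t \<ge> t' \<Longrightarrow> t' \<ge> 0 \<Longrightarrow> flow_img f t W \<subseteq> flow_img f t' W"
    and S: "ode_sol f {t0..} t0 s0 S" and s0: "s0 \<in> W" and \<tau>: "t0 \<le> \<tau>"
  shows "S \<tau> \<in> W"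
proof -
  define x where "x r = S (r + t0)" for r
  have "ode_sol f {0..\<tau>-t0} 0 s0 x"
    unfolding ode_sol_def
  proof (intro conjI ballI)
    show "0 \<in> {0..\<tau> - t0}" using \<tau> by auto
    show "x 0 = s0" using S by (simp add: x_def ode_sol_def)
    fix \<rho> assume \<rho>: "\<rho> \<in> {0..\<tau> - t0}"
    have d1: "((\<lambda>r. r + t0) has_vector_derivative 1) (at \<rho> within {0..\<tau> - t0})"
      by (auto intro!: derivative_eq_intros)
    have "(S has_vector_derivative f (S (\<rho> + t0))) (at (\<rho> + t0) within {t0..})"
      using S \<rho> by (auto simp: ode_sol_def)
    then have d2: "(S has_vector_derivative f (S (\<rho> + t0))) (at ((\<lambda>r. r + t0) \<rho>) within (\<lambda>r. r + t0) ` {0..\<tau> - t0})"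
      by (rule has_vector_derivative_within_subset) auto
    from vector_diff_chain_within[OF d1 d2]
    show "(x has_vector_derivative f (x \<rho>)) (at \<rho> within {0..\<tau> - t0})"
      by (simp add: x_def[abs_def] o_def)
  qed
  moreover have "x (\<tau> - t0) = S \<tau>" by (simp add: x_def)
  ultimately have "S \<tau> \<in> flow_img f (\<tau> - t0) W" unfolding flow_img_def using s0 by blast
  then have "S \<tau> \<in> flow_img f 0 W" using Wf[of 0 "\<tau> - t0"] \<tau> by auto
  then show ?thesis unfolding flow_img_def ode_sol_def by auto
qed

lemma f_lip:
  fixes F :: "real^'n^'m \<Rightarrow> real \<Rightarrow> real^'n^'m"
    and f :: "real^'n \<Rightarrow> real^'n"
    and DF :: "real \<Rightarrow> real^'n^'m \<Rightarrow> ((real^'n^'m) \<Rightarrow>\<^sub>L (real^'n^'m))"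
    and \<phi> :: "real^'n^'m \<Rightarrow> real"
  assumes A1a: "\<And>s t. t \<ge> 0 \<Longrightarrow> F (hat s) t = hat (f s)"
    and A1b: "\<And>x t. t \<ge> 0 \<Longrightarrow> ((\<lambda>y. F y t) has_derivative blinfun_apply (DF t x)) (at x)"
    and A1c: "locally_bounded \<phi>" "\<And>x t. t \<ge> 0 \<Longrightarrow> norm (DF t x) \<le> \<phi> x"
    and W: "compact W"
  shows "\<exists>L\<ge>0. \<forall>a\<in>W. \<forall>b\<in>W. norm (f a - f b) \<le> L * norm (a - b)"
proof -
  define H where "H = convex hull ((hat :: real^'n \<Rightarrow> real^'n^'m) ` W)"
  have "compact ((hat :: real^'n \<Rightarrow> real^'n^'m) ` W)"
    by (rule compact_continuous_image[OF linear_continuous_on[OF hat_bl] W])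
  then have "compact H" unfolding H_def by (rule compact_convex_hull)
  from lb_compact[OF A1c(1) this] obtain B where B: "B \<ge> 0" "\<forall>x\<in>H. \<bar>\<phi> x\<bar> \<le> B" by blast
  have c: "sqrt (real CARD('m)) > 0" by simp
  have "norm (f a - f b) \<le> B * norm (a - b)" if ab: "a \<in> W" "b \<in> W" for a b
  proof -
    have "norm (F (hat a) 0 - F (hat b) 0) \<le> B * norm (hat a - hat b :: real^'n^'m)"
    proof (rule differentiable_bound[of H "\<lambda>y. F y 0" "\<lambda>x. blinfun_apply (DF 0 x)"])
      show "convex H" unfolding H_def by (rule convex_convex_hull)
      show "((\<lambda>y. F y 0) has_derivative blinfun_apply (DF 0 x)) (at x within H)" for x
        by (rule has_derivative_at_withinI[OF A1b]) simp
      show "onorm (blinfun_apply (DF 0 x)) \<le> B" if "x \<in> H" for x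
      proof -
        have "onorm (blinfun_apply (DF 0 x)) = norm (DF 0 x)" by (simp add: norm_blinfun.rep_eq)
        also have "\<dots> \<le> \<phi> x" by (rule A1c(2)) simp
        also have "\<dots> \<le> B" using B(2) that by force
        finally show ?thesis .
      qed
      show "hat a \<in> H" "hat b \<in> H" unfolding H_def using ab by (auto intro: hull_inc)
    qed
    moreover have "F (hat a) 0 - F (hat b) 0 = (hat (f a - f b) :: real^'n^'m)"
      using A1a[OF order_refl] linear_diff[OF bounded_linear.linear[OF hat_bl]] by metis
    moreover have "(hat a - hat b :: real^'n^'m) = hat (a - b)"
      using linear_diff[OF bounded_linear.linear[OF hat_bl]] by metis
    ultimately have "sqrt (real CARD('m)) * norm (f a - f b) \<le> sqrt (real CARD('m)) * (B * norm (a - b))"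
      by (simp add: norm_hat mult_ac)
    then show ?thesis using c by simp
  qed
  then show ?thesis using B(1) by blast
qed

lemma part2:
  fixes F :: "real^'n^'m \<Rightarrow> real \<Rightarrow> real^'n^'m"
    and f :: "real^'n \<Rightarrow> real^'n"
    and DF :: "real \<Rightarrow> real^'n^'m \<Rightarrow> ((real^'n^'m) \<Rightarrow>\<^sub>L (real^'n^'m))"
    and \<phi> :: "real^'n^'m \<Rightarrow> real"
    and K :: "real^'n^'m \<Rightarrow> real^'n^'m \<Rightarrow> real"
    and W :: "(real^'n) set"
  assumes A1a: "\<And>s t. t \<ge> 0 \<Longrightarrow> F (hat s) t = hat (f s)"
    and A1b: "\<And>x t. t \<ge> 0 \<Longrightarrow> ((\<lambda>y. F y t) has_derivative blinfun_apply (DF t x)) (at x)"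
    and A1c: "locally_bounded \<phi>" "\<And>x t. t \<ge> 0 \<Longrightarrow> norm (DF t x) \<le> \<phi> x"
    and A1d: "locally_bounded (case_prod K)"
      "\<And>x y t. t \<ge> 0 \<Longrightarrow> norm (DF t x - DF t y) \<le> K x y * norm (x - y)"
    and W: "compact W"
      "\<And>t t'. t \<ge> t' \<Longrightarrow> t' \<ge> 0 \<Longrightarrow> flow_img f t W \<subseteq> flow_img f t' W"
    and hyp: "\<forall>t0\<ge>0. \<forall>s0\<in>W. ode_sol f {t0..} t0 s0 (sf t0 s0)
          \<and> (\<forall>v. car_sol (\<lambda>\<tau> x. DF \<tau> (hat (sf t0 s0 \<tau>)) x) {t0..} t0 v (\<lambda>t. Uf t t0 s0 v))"
    and t: "t \<ge> 0"
  shows "(\<exists>B. \<forall>t0\<ge>0. \<forall>s0\<in>W. onorm (Uf (t + t0) t0 s0) \<le> B)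
            \<and> (\<forall>s0\<in>W. \<forall>e>0. \<exists>d>0. \<forall>t0\<ge>0. \<forall>s1\<in>W. dist s1 s0 < d \<longrightarrow>
                 onorm (\<lambda>v. Uf (t + t0) t0 s1 v - Uf (t + t0) t0 s0 v) < e)"
proof -
  define Wh where "Wh = (hat :: real^'n \<Rightarrow> real^'n^'m) ` W"
  have cWh: "compact Wh" unfolding Wh_def
    by (rule compact_continuous_image[OF linear_continuous_on[OF hat_bl] W(1)])
  from lb_compact[OF A1c(1) cWh] obtain \<Phi> where \<Phi>: "\<Phi> \<ge> 0" "\<forall>x\<in>Wh. \<bar>\<phi> x\<bar> \<le> \<Phi>" by blast
  from lb_compact[OF A1d(1) compact_Times[OF cWh cWh]] obtain Kb where
    Kb: "Kb \<ge> 0" "\<forall>p\<in>Wh \<times> Wh. \<bar>case_prod K p\<bar> \<le> Kb" by blast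
  from f_lip[OF A1a A1b A1c W(1)] obtain L where
    L: "L \<ge> 0" "\<forall>a\<in>W. \<forall>b\<in>W. norm (f a - f b) \<le> L * norm (a - b)" by blast
  define c where "c = sqrt (real CARD('m))"
  have c: "c \<ge> 0" unfolding c_def by simp
  have ode: "ode_sol f {t0..} t0 s0 (sf t0 s0)" if "t0 \<ge> 0" "s0 \<in> W" for t0 s0
    using hyp that by blast
  have car: "car_sol (\<lambda>\<tau> x. DF \<tau> (hat (sf t0 s0 \<tau>)) x) {t0..} t0 v (\<lambda>t. Uf t t0 s0 v)"
    if "t0 \<ge> 0" "s0 \<in> W" for t0 s0 v
    using hyp that by blast
  have inW: "sf t0 s0 \<tau> \<in> W" if "t0 \<ge> 0" "s0 \<in> W" "t0 \<le> \<tau>" for t0 s0 \<tau>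
    by (rule traj_in_W[OF W(2) ode[OF that(1,2)] that(2,3)])
  have Abd: "norm (DF \<tau> (hat (sf t0 s0 \<tau>)) w) \<le> \<Phi> * norm w"
    if "t0 \<ge> 0" "s0 \<in> W" "t0 \<le> \<tau>" for t0 s0 \<tau> w
  proof -
    have "norm (DF \<tau> (hat (sf t0 s0 \<tau>)) w) \<le> norm (DF \<tau> (hat (sf t0 s0 \<tau>))) * norm w"
      by (rule norm_blinfun)
    also have "\<dots> \<le> \<Phi> * norm w"
    proof (rule mult_right_mono)
      have "norm (DF \<tau> (hat (sf t0 s0 \<tau>))) \<le> \<phi> (hat (sf t0 s0 \<tau>))"
        by (rule A1c(2)) (use that in auto)
      also have "\<dots> \<le> \<Phi>" using \<Phi>(2) inW[OF that] unfolding Wh_def by force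
      finally show "norm (DF \<tau> (hat (sf t0 s0 \<tau>))) \<le> \<Phi>" .
    qed simp
    finally show ?thesis .
  qed
  have growth: "norm (Uf r t0 s0 v) \<le> norm v * exp (\<Phi> * (r - t0))"
    if "t0 \<ge> 0" "s0 \<in> W" "t0 \<le> r" for t0 s0 r v
    by (rule car_growth[OF car[OF that(1,2)] \<Phi>(1), of r, simplified])
      (use Abd that in auto)
  have part_a: "\<exists>B. \<forall>t0\<ge>0. \<forall>s0\<in>W. onorm (Uf (t + t0) t0 s0) \<le> B"
  proof (intro exI allI impI ballI)
    fix t0 s0 assume "t0 \<ge> (0::real)" "s0 \<in> W"
    then show "onorm (Uf (t + t0) t0 s0) \<le> exp (\<Phi> * t)"
      using growth[of t0 s0 "t + t0"] t by (intro onorm_le) (auto simp: mult.commute)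
  qed
  define Q where "Q = Kb * c * exp (L * t) * exp (\<Phi> * t)"
  have Q: "Q \<ge> 0" unfolding Q_def using Kb(1) c by simp
  have part_b: "\<exists>d>0. \<forall>t0\<ge>0. \<forall>s1\<in>W. dist s1 s0 < d \<longrightarrow>
                 onorm (\<lambda>v. Uf (t + t0) t0 s1 v - Uf (t + t0) t0 s0 v) < e"
    if s0: "s0 \<in> W" and e: "e > 0" for s0 e
  proof -
    define R where "R = Q * t * exp (\<Phi> * t)"
    have R: "R \<ge> 0" unfolding R_def using Q t by simp
    define d where "d = e / (2 * (R + 1))"
    have d: "d > 0" unfolding d_def using e R by simp
    have Rd: "R * d < e"
    proof -
      have "R * d = e * (R / (2 * (R + 1)))" unfolding d_def by simp
      also have "R / (2 * (R + 1)) < 1" using R by (simp add: field_simps)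
      then have "e * (R / (2 * (R + 1))) < e * 1" using e by (intro mult_strict_left_mono) auto
      finally show ?thesis by simp
    qed
    show ?thesis
    proof (intro exI[of _ d] conjI allI impI ballI d)
      fix t0 s1 assume t0: "t0 \<ge> (0::real)" and s1: "s1 \<in> W" and ds: "dist s1 s0 < d"
      define S1 where "S1 = sf t0 s1"
      define S0 where "S0 = sf t0 s0"
      have trd: "norm (S1 \<tau> - S0 \<tau>) \<le> d * exp (L * t)" if \<tau>: "\<tau> \<in> {t0..t0 + t}" for \<tau>
      proof -
        have "norm (S1 \<tau> - S0 \<tau>) \<le> norm (s1 - s0) * exp (L * (\<tau> - t0))"
          unfolding S1_def S0_def
          by (rule traj_diff[OF ode[OF t0 s1] ode[OF t0 s0] L(1) _ \<tau>])
            (use L(2) inW[OF t0 s1] inW[OF t0 s0] in auto)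
        also have "\<dots> \<le> d * exp (L * t)"
          using ds \<tau> L(1) d by (intro mult_mono) (auto simp: dist_norm mult_left_mono)
        finally show ?thesis .
      qed
      have "norm (Uf (t + t0) t0 s1 v - Uf (t + t0) t0 s0 v) \<le> (R * d) * norm v" for v
      proof -
        have "norm (Uf (t + t0) t0 s1 v - Uf (t + t0) t0 s0 v)
            \<le> (Q * d * norm v) * (t0 + t - t0) * exp (\<Phi> * (t + t0 - t0))"
        proof (rule car_diff[OF car[OF t0 s1] car[OF t0 s0] _ \<Phi>(1)])
          show "DF \<tau> (hat (sf t0 s1 \<tau>)) a - DF \<tau> (hat (sf t0 s1 \<tau>)) b = DF \<tau> (hat (sf t0 s1 \<tau>)) (a - b)"
            for \<tau> a b by (simp add: blinfun.diff_right)
          show "norm (DF \<tau> (hat (sf t0 s1 \<tau>)) w) \<le> \<Phi> * norm w" if "\<tau> \<in> {t0..t0 + t}" for \<tau> w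
            using Abd[OF t0 s1] that by auto
          show "0 \<le> Q * d * norm v" using Q d by simp
          show "t + t0 \<in> {t0..t0 + t}" using t by simp
          fix \<tau> assume \<tau>: "\<tau> \<in> {t0..t0 + t}"
          have m1: "S1 \<tau> \<in> W" "S0 \<tau> \<in> W" using inW[OF t0 s1] inW[OF t0 s0] \<tau> by (auto simp: S1_def S0_def)
          have "norm (DF \<tau> (hat (S1 \<tau>)) (Uf \<tau> t0 s0 v) - DF \<tau> (hat (S0 \<tau>)) (Uf \<tau> t0 s0 v))
              = norm ((DF \<tau> (hat (S1 \<tau>)) - DF \<tau> (hat (S0 \<tau>))) (Uf \<tau> t0 s0 v))"
            by (simp add: blinfun.diff_left)
          also have "\<dots> \<le> norm (DF \<tau> (hat (S1 \<tau>)) - DF \<tau> (hat (S0 \<tau>))) * norm (Uf \<tau> t0 s0 v)"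
            by (rule norm_blinfun)
          also have "\<dots> \<le> (Kb * (c * (d * exp (L * t)))) * (norm v * exp (\<Phi> * t))"
          proof (rule mult_mono)
            have "norm (DF \<tau> (hat (S1 \<tau>)) - DF \<tau> (hat (S0 \<tau>)))
                \<le> K (hat (S1 \<tau>)) (hat (S0 \<tau>)) * norm (hat (S1 \<tau>) - hat (S0 \<tau>) :: real^'n^'m)"
              by (rule A1d(2)) (use t0 \<tau> in auto)
            also have "\<dots> \<le> \<bar>K (hat (S1 \<tau>)) (hat (S0 \<tau>))\<bar> * norm (hat (S1 \<tau>) - hat (S0 \<tau>) :: real^'n^'m)"
              by (intro mult_right_mono) auto
            also have "\<dots> \<le> Kb * norm (hat (S1 \<tau>) - hat (S0 \<tau>) :: real^'n^'m)"
            proof (intro mult_right_mono)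
              have "(hat (S1 \<tau>), hat (S0 \<tau>)) \<in> Wh \<times> Wh" using m1 unfolding Wh_def by auto
              then show "\<bar>K (hat (S1 \<tau>)) (hat (S0 \<tau>))\<bar> \<le> Kb" using Kb(2) by fastforce
            qed simp
            also have "norm (hat (S1 \<tau>) - hat (S0 \<tau>) :: real^'n^'m) = c * norm (S1 \<tau> - S0 \<tau>)"
              using linear_diff[OF bounded_linear.linear[OF hat_bl], of "S1 \<tau>" "S0 \<tau>"]
              by (metis c_def norm_hat)
            also have "Kb * (c * norm (S1 \<tau> - S0 \<tau>)) \<le> Kb * (c * (d * exp (L * t)))"
              using trd[OF \<tau>] Kb(1) c by (intro mult_left_mono) auto
            finally show "norm (DF \<tau> (hat (S1 \<tau>)) - DF \<tau> (hat (S0 \<tau>))) \<le> Kb * (c * (d * exp (L * t)))" .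
            have "norm (Uf \<tau> t0 s0 v) \<le> norm v * exp (\<Phi> * (\<tau> - t0))"
              using growth[OF t0 s0] \<tau> by auto
            also have "\<dots> \<le> norm v * exp (\<Phi> * t)"
              using \<tau> \<Phi>(1) by (intro mult_left_mono) (auto intro: mult_left_mono)
            finally show "norm (Uf \<tau> t0 s0 v) \<le> norm v * exp (\<Phi> * t)" .
          qed (use Kb(1) c d in auto)
          also have "\<dots> = Q * d * norm v" unfolding Q_def by (simp add: mult_ac)
          finally show "norm (DF \<tau> (hat (sf t0 s1 \<tau>)) (Uf \<tau> t0 s0 v) - DF \<tau> (hat (sf t0 s0 \<tau>)) (Uf \<tau> t0 s0 v))
              \<le> Q * d * norm v" by (simp add: S1_def S0_def)
        qed
        also have "\<dots> = (R * d) * norm v" unfolding R_def by (simp add: mult_ac)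
        finally show ?thesis .
      qed
      then have "onorm (\<lambda>v. Uf (t + t0) t0 s1 v - Uf (t + t0) t0 s0 v) \<le> R * d"
        by (intro onorm_le) auto
      with Rd show "onorm (\<lambda>v. Uf (t + t0) t0 s1 v - Uf (t + t0) t0 s0 v) < e" by linarith
    qed
  qed
  show ?thesis using part_a part_b by blast
qed


theorem lemma5:
  fixes F :: "real^'n^'m \<Rightarrow> real \<Rightarrow> real^'n^'m"
    and f :: "real^'n \<Rightarrow> real^'n"
    and DF :: "real \<Rightarrow> real^'n^'m \<Rightarrow> ((real^'n^'m) \<Rightarrow>\<^sub>L (real^'n^'m))"
    and \<phi> :: "real^'n^'m \<Rightarrow> real"
    and K :: "real^'n^'m \<Rightarrow> real^'n^'m \<Rightarrow> real"
    and A W :: "(real^'n) set"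
  assumes A1a: "\<And>s t. t \<ge> 0 \<Longrightarrow> F (hat s) t = hat (f s)"
    and A1b: "\<And>x t. t \<ge> 0 \<Longrightarrow> ((\<lambda>y. F y t) has_derivative blinfun_apply (DF t x)) (at x)"
    and A1b': "\<And>t. t \<ge> 0 \<Longrightarrow> continuous_on UNIV (DF t)"
    and A1c: "locally_bounded \<phi>" "\<And>x t. t \<ge> 0 \<Longrightarrow> norm (DF t x) \<le> \<phi> x"
    and A1d: "locally_bounded (case_prod K)"
      "\<And>x y t. t \<ge> 0 \<Longrightarrow> norm (DF t x - DF t y) \<le> K x y * norm (x - y)"
    and A1e: "\<And>x. (\<lambda>t. F x t) \<in> borel_measurable (restrict_space lborel {0..})"
      "\<And>x. (\<lambda>t. DF t x) \<in> borel_measurable (restrict_space lborel {0..})"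
    and A2: "compact A"
    and A2a: "\<And>t. t \<ge> 0 \<Longrightarrow> flow_img f t A \<subseteq> A"
    and A2b: "\<exists>U. open U \<and> bounded U \<and> A \<subseteq> U \<and> (\<Inter>t\<in>{0..}. flow_img f t (closure U)) = A"
    and A2c: "\<exists>s0\<in>A. omega_limit f s0 = A"
    and W: "compact W" "A \<subseteq> interior W"
      "\<And>t t'. t \<ge> t' \<Longrightarrow> t' \<ge> 0 \<Longrightarrow> flow_img f t W \<subseteq> flow_img f t' W"
      "(\<Inter>t\<in>{0..}. flow_img f t W) = A"
  shows
    "(\<forall>t0 s0 s U Ub. t0 \<ge> 0 \<and> ode_sol f {0..} t0 s0 s
        \<and> (\<forall>v. car_sol (\<lambda>\<tau> x. DF \<tau> (hat (s \<tau>)) x) {0..} t0 v (\<lambda>t. U t v))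
        \<and> (\<forall>u. car_sol (\<lambda>\<tau> y. frechet_derivative f (at (s \<tau>)) y) {0..} t0 u (\<lambda>t. Ub t u))
        \<longrightarrow> (\<forall>t\<ge>0. \<forall>i u. (\<Sum>j\<in>UNIV. block (U t) i j u) = Ub t u))
   \<and> (\<forall>sf Uf. (\<forall>t0\<ge>0. \<forall>s0\<in>W. ode_sol f {t0..} t0 s0 (sf t0 s0)
          \<and> (\<forall>v. car_sol (\<lambda>\<tau> x. DF \<tau> (hat (sf t0 s0 \<tau>)) x) {t0..} t0 v (\<lambda>t. Uf t t0 s0 v)))
        \<longrightarrow> (\<forall>t\<ge>0.
              (\<exists>B. \<forall>t0\<ge>0. \<forall>s0\<in>W. onorm (Uf (t + t0) t0 s0) \<le> B)
            \<and> (\<forall>s0\<in>W. \<forall>e>0. \<exists>d>0. \<forall>t0\<ge>0. \<forall>s1\<in>W. dist s1 s0 < d \<longrightarrow>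
                 onorm (\<lambda>v. Uf (t + t0) t0 s1 v - Uf (t + t0) t0 s0 v) < e)))"
  proof (intro conjI allI impI)
  fix t0 s0 s U Ub t i u
  assume H: "t0 \<ge> 0 \<and> ode_sol f {0..} t0 s0 s
        \<and> (\<forall>v. car_sol (\<lambda>\<tau> x. DF \<tau> (hat (s \<tau>)) x) {0..} t0 v (\<lambda>t. U t v))
        \<and> (\<forall>u. car_sol (\<lambda>\<tau> y. frechet_derivative f (at (s \<tau>)) y) {0..} t0 u (\<lambda>t. Ub t u))"
    and t: "(0::real) \<le> t"
  show "(\<Sum>j\<in>UNIV. block (U t) i j u) = Ub t u"
  proof -
    from H have h1: "t0 \<ge> 0" and h2: "ode_sol f {0..} t0 s0 s"
      and h3: "\<And>v. car_sol (\<lambda>\<tau> x. DF \<tau> (hat (s \<tau>)) x) {0..} t0 v (\<lambda>t. U t v)"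
      and h4: "\<And>u. car_sol (\<lambda>\<tau> y. frechet_derivative f (at (s \<tau>)) y) {0..} t0 u (\<lambda>t. Ub t u)"
      by auto
    show ?thesis by (rule part1[OF A1a A1b A1c h1 h2 h3 h4 t])
  qed
next
  fix sf Uf t
  assume H: "\<forall>t0\<ge>0. \<forall>s0\<in>W. ode_sol f {t0..} t0 s0 (sf t0 s0)
          \<and> (\<forall>v. car_sol (\<lambda>\<tau> x. DF \<tau> (hat (sf t0 s0 \<tau>)) x) {t0..} t0 v (\<lambda>t. Uf t t0 s0 v))"
    and t: "(0::real) \<le> t"
  note P = part2[OF A1a A1b A1c A1d W(1) W(3) H t]
  show "\<exists>B. \<forall>t0\<ge>0. \<forall>s0\<in>W. onorm (Uf (t + t0) t0 s0) \<le> B" using P by blast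
  show "\<forall>s0\<in>W. \<forall>e>0. \<exists>d>0. \<forall>t0\<ge>0. \<forall>s1\<in>W. dist s1 s0 < d \<longrightarrow>
                 onorm (\<lambda>v. Uf (t + t0) t0 s1 v - Uf (t + t0) t0 s0 v) < e" using P by blast
qed

end
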